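(* Let $\eta_1,\eta_2,\dots$ be i.i.d. random variables with common distribution $G$ and let $T_n:=\eta_1+\dots+\eta_n$. Assume $\mathbb E\eta_1=0$, $\mathbb E\{\eta_1^2;\eta_1\le0\}<\infty$, and $G$ is dominated varying, i.e. $\sup_x\overline G(x/2)/\overline G(x)<\infty$. (i) If for some $\delta\in(0,1)$, $\mathbb E\{\eta_1^{1+\delta};\eta_1>0\}<\infty$, then for every $\delta'\in(0,\delta)$ there exists $c<\infty$ such that $\Pr\{T_n>x\}\le cn\overline G(x)$ for all $x>0$ and $n\le x^{1+\delta'}$. (ii) If for some $\delta>0$, $\mathbb E\{\eta_1^{2+\delta};\eta_1>0\}<\infty$, then there exists $c<\infty$ such that $\Pr\{T_n>x\}\le cn\overline G(x)$ for all $x>0$ and $n\le x^2/(c\log x)$.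
   Context: $\overline G(x):=\Pr\{\eta_1>x\}$. $\mathbb E\{X;A\}$ denotes $\mathbb E[X\mathbf 1_A]$. *)

theory Defs
  imports "HOL-Probability.Probability"
begin

definition tail :: "'a measure \<Rightarrow> ('a \<Rightarrow> real) \<Rightarrow> real \<Rightarrow> real" where
  "tail M X x = measure M {\<omega> \<in> space M. X \<omega> > x}"

end

theory Submission
  imports Defs
begin


lemma exp_le_neg: fixes t :: real assumes "t \<le> (0::real)" shows "exp t \<le> 1 + t + t^2"
proof -
  define s where "s = -t"
  have s: "s \<ge> 0" using assms s_def by simp
  have e: "1 + s + s^2/2 \<le> exp s" using exp_lower_Taylor_quadratic[OF s] .
  have "0 \<le> s^2/2" by simp
  hence pos: "0 < 1 + s + s^2/2" using s by linarith
  have "(1 - s + s^2) * (1 + s + s^2/2) \<ge> 1"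
  proof -
    have "(1 - s + s^2) * (1 + s + s^2/2) = 1 + s^2/2 + s^3/2 + s^4/2" by (simp add: field_simps power2_eq_square power3_eq_cube power4_eq_xxxx)
    also have "\<dots> \<ge> 1" using s by simp
    finally show ?thesis .
  qed
  hence "1 / (1 + s + s^2/2) \<le> 1 - s + s^2" using pos by (simp add: field_simps)
  moreover have "exp t \<le> 1 / (1 + s + s^2/2)"
    using e pos by (simp add: s_def exp_minus field_simps)
  ultimately show ?thesis by (simp add: s_def)
qed

lemma exp_le_pos1: fixes t T p :: real assumes "0 \<le> t" "t \<le> T" "1 \<le> p" "p \<le> 2"
  shows "exp t \<le> 1 + t + exp T * t powr p"
proof (cases "t \<le> 1")
  case True
  have "t^2 \<le> t powr p"
  proof (cases "t = 0")
    case False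
    hence "t powr 2 \<le> t powr p" using True assms by (intro powr_mono') auto
    thus ?thesis using assms by (simp add: powr_numeral)
  qed simp
  moreover have "t powr p \<le> exp T * t powr p" using assms by (simp add: mult_le_cancel_right1)
  ultimately show ?thesis using exp_bound[OF assms(1) True] by linarith
next
  case False
  have "1 \<le> t powr p" using False assms by (simp add: ge_one_powr_ge_zero)
  hence "exp T \<le> exp T * t powr p" by simp
  moreover have "exp t \<le> exp T" using assms by simp
  ultimately show ?thesis using False by linarith
qed

lemma exp_le_pos2: fixes t T p :: real assumes "0 \<le> t" "t \<le> T" "0 \<le> p"
  shows "exp t \<le> 1 + t + t^2 + exp T * t powr p"
proof (cases "t \<le> 1")
  case True
  have "0 \<le> exp T * t powr p" by simp
  thus ?thesis using exp_bound[OF assms(1) True] by linarith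
next
  case False
  have "1 \<le> t powr p" using False assms by (simp add: ge_one_powr_ge_zero)
  hence "exp T \<le> exp T * t powr p" by simp
  moreover have "exp t \<le> exp T" using assms by simp
  ultimately show ?thesis using False by (smt (verit) zero_le_power2)
qed



lemma u_le_exp: fixes u s :: real assumes "0 \<le> u" "0 < s" shows "u \<le> exp (s * u) / s"
proof -
  have "1 + s * u \<le> exp (s * u)" by (rule exp_ge_add_one_self)
  hence "s * u \<le> exp (s * u)" by linarith
  thus ?thesis using assms by (simp add: field_simps)
qed

lemma upowr_le_exp: fixes u q e :: real assumes "0 \<le> u" "0 < q" "0 < e"
  shows "u powr q \<le> exp (e * u) * (q / e) powr q"
proof -
  have "u \<le> exp ((e/q) * u) / (e/q)" using assms by (intro u_le_exp) auto
  also have "\<dots> = exp ((e/q) * u) * (q/e)" by simp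
  finally have "u powr q \<le> (exp ((e/q) * u) * (q/e)) powr q" using assms by (intro powr_mono2) auto
  also have "\<dots> = exp ((e/q) * u) powr q * (q/e) powr q" by (rule powr_mult; use assms in auto)
  also have "exp ((e/q) * u) powr q = exp (e * u)" using assms by (simp add: powr_def)
  finally show ?thesis .
qed


lemma num1:
  fixes d d' a A B x :: real and n :: nat
  assumes d: "0 < d'" "d' < d" "d < 1" and a: "0 < a" and AB: "0 \<le> A" "0 \<le> B"
    and x: "1 \<le> x" and n: "real n \<le> x powr (1+d')"
  shows "real n * ((a * ln x / x)^2 * A + exp ((d - d')/2 * ln x) * (a * ln x / x) powr (1+d) * B)
     \<le> a^2 * A * (2/(1-d')) powr 2 + a powr (1+d) * B * ((1+d)/((d - d')/2)) powr (1+d)"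
proof -
  define u where "u = ln x"
  define e where "e = (d - d')/2"
  have u: "0 \<le> u" using x by (simp add: u_def)
  have xu: "x = exp u" using x by (simp add: u_def)
  have e: "0 < e" using d by (simp add: e_def)
  have nexp: "real n \<le> exp ((1+d') * u)" using n x by (simp add: powr_def u_def)
  have u2: "u^2 \<le> exp ((1-d') * u) * (2/(1-d')) powr 2"
  proof -
    have "u powr 2 \<le> exp ((1-d') * u) * (2/(1-d')) powr 2" using u d by (intro upowr_le_exp) auto
    moreover have "u powr 2 = u^2" using u by (cases "u = 0") (auto simp: powr_numeral)
    ultimately show ?thesis by simp
  qed
  have T1: "real n * ((a * u / x)^2 * A) \<le> a^2 * A * (2/(1-d')) powr 2"
  proof -
    have "real n * ((a * u / x)^2 * A) = a^2 * A * (real n * u^2 / exp (2*u))"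
      by (simp add: xu power_mult_distrib power_divide exp_double[symmetric] field_simps)
    also have "real n * u^2 / exp (2*u) \<le> exp ((1+d') * u) * (exp ((1-d') * u) * (2/(1-d')) powr 2) / exp (2*u)"
      using nexp u2 by (intro divide_right_mono mult_mono) auto
    also have "\<dots> = (2/(1-d')) powr 2"
    proof -
      have "(1+d') * u + (1-d') * u = 2 * u" by (simp add: algebra_simps)
      hence "exp ((1+d') * u) * exp ((1-d') * u) = exp (2 * u)" by (metis exp_add)
      thus ?thesis by (simp add: field_simps)
    qed
    finally show ?thesis using a AB by (simp add: mult_left_mono)
  qed
  have T2: "real n * (exp (e * u) * (a * u / x) powr (1+d) * B) \<le> a powr (1+d) * B * ((1+d)/e) powr (1+d)"
  proof -
    have hp: "(a * u / x) powr (1+d) = a powr (1+d) * u powr (1+d) / exp ((1+d) * u)"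
      using a u x by (simp add: powr_divide powr_mult xu exp_powr_real mult.commute)
    have up: "u powr (1+d) \<le> exp (e * u) * ((1+d)/e) powr (1+d)"
      using u d e by (intro upowr_le_exp) auto
    have "real n * (exp (e * u) * (a * u / x) powr (1+d) * B)
       = a powr (1+d) * B * (real n * exp (e * u) * u powr (1+d) / exp ((1+d) * u))"
      by (simp add: hp field_simps)
    also have "real n * exp (e * u) * u powr (1+d) / exp ((1+d) * u)
       \<le> exp ((1+d') * u) * exp (e * u) * (exp (e * u) * ((1+d)/e) powr (1+d)) / exp ((1+d) * u)"
      using nexp up by (intro divide_right_mono mult_mono) auto
    also have "\<dots> = ((1+d)/e) powr (1+d)"
    proof -
      have "(1+d') * u + e * u + e * u = (1+d) * u" by (simp add: e_def algebra_simps)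
      hence "exp ((1+d') * u) * exp (e * u) * exp (e * u) = exp ((1+d) * u)"
        by (metis exp_add)
      thus ?thesis by (simp add: field_simps)
    qed
    finally show ?thesis using a AB by (simp add: mult_left_mono)
  qed
  show ?thesis using T1 T2 unfolding u_def[symmetric] e_def[symmetric] by (simp add: distrib_left)
qed

lemma num2:
  fixes d a S B x c :: real and n :: nat
  assumes d: "0 < d" and a: "0 < a" and SB: "0 \<le> S" "0 \<le> B" and c: "1 \<le> c" "2 * a * S \<le> c"
    and x: "1 < x" and n: "real n \<le> x^2 / (c * ln x)"
  shows "real n * ((a * ln x / x)^2 * S + exp (d/2 * ln x) * (a * ln x / x) powr (2+d) * B)
     \<le> a / 2 * ln x + a powr (2+d) * B * ((1+d)/(d/2)) powr (1+d)"
proof -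
  define u where "u = ln x"
  define e where "e = d/2"
  have u: "0 < u" using x by (simp add: u_def)
  have xu: "x = exp u" using x by (simp add: u_def)
  have e: "0 < e" using d by (simp add: e_def)
  have x2: "x^2 = exp (2 * u)" by (simp add: xu power2_eq_square mult_exp_exp)
  have nexp: "real n \<le> exp (2 * u) / (c * u)" using n by (simp add: x2 u_def[symmetric])
  have T1: "real n * ((a * u / x)^2 * S) \<le> a / 2 * u"
  proof -
    have "real n * ((a * u / x)^2 * S) = a^2 * S * u^2 * (real n / exp (2*u))"
      by (simp add: xu power_mult_distrib power_divide exp_double[symmetric] field_simps)
    also have "real n / exp (2*u) \<le> 1 / (c * u)"
      using nexp u c by (simp add: field_simps)
    hence "a^2 * S * u^2 * (real n / exp (2*u)) \<le> a^2 * S * u^2 * (1 / (c * u))"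
      using a SB by (intro mult_left_mono) auto
    also have "\<dots> = a * u * (a * S / c)" using u c by (simp add: field_simps power2_eq_square)
    also have "\<dots> \<le> a * u * (1/2)"
      using c a u by (intro mult_left_mono) (auto simp: field_simps)
    finally show ?thesis by simp
  qed
  have T2: "real n * (exp (e * u) * (a * u / x) powr (2+d) * B) \<le> a powr (2+d) * B * ((1+d)/e) powr (1+d)"
  proof -
    have hp: "(a * u / x) powr (2+d) = a powr (2+d) * (u * u powr (1+d)) / exp ((2+d) * u)"
    proof -
      have "u powr (2+d) = u powr (1 + (1+d))" by (simp add: add.assoc)
      also have "\<dots> = u powr 1 * u powr (1+d)" by (rule powr_add)
      finally have "u powr (2+d) = u powr 1 * u powr (1+d)" .
      thus ?thesis using a u x by (simp add: powr_divide powr_mult xu exp_powr_real mult.commute)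
    qed
    have up: "u powr (1+d) \<le> exp (e * u) * ((1+d)/e) powr (1+d)"
      using u d e by (intro upowr_le_exp) auto
    have "real n * (exp (e * u) * (a * u / x) powr (2+d) * B)
       = a powr (2+d) * B * ((real n * u) * exp (e * u) * u powr (1+d) / exp ((2+d) * u))"
      unfolding hp by (simp add: field_simps)
    also have "(real n * u) * exp (e * u) * u powr (1+d) / exp ((2+d) * u)
       \<le> exp (2 * u) * exp (e * u) * (exp (e * u) * ((1+d)/e) powr (1+d)) / exp ((2+d) * u)"
    proof -
      have "real n * u \<le> exp (2 * u) / c" using nexp u c by (simp add: field_simps)
      also have "\<dots> \<le> exp (2 * u)" using c by (simp add: field_simps)
      finally have "real n * u \<le> exp (2 * u)" .
      thus ?thesis using up u by (intro divide_right_mono mult_mono) auto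
    qed
    also have "\<dots> = ((1+d)/e) powr (1+d)"
    proof -
      have "2 * u + e * u + e * u = (2+d) * u" by (simp add: e_def algebra_simps)
      hence "exp (2 * u) * exp (e * u) * exp (e * u) = exp ((2+d) * u)"
        by (metis exp_add)
      thus ?thesis by (simp add: field_simps)
    qed
    finally show ?thesis using a SB by (simp add: mult_left_mono)
  qed
  show ?thesis using T1 T2 unfolding u_def[symmetric] e_def[symmetric] by (simp add: distrib_left)
qed


lemma pow2_cover:
  fixes x C :: real
  assumes x: "1 \<le> x" and C: "1 \<le> C"
  shows "\<exists>k::nat. x \<le> 2^k \<and> C^k \<le> C * exp (ln C / ln 2 * ln x)"
proof -
  define k where "k = nat \<lceil>log 2 x\<rceil>"
  have lg: "0 \<le> log 2 x" using x by simp
  have kk: "real k = of_int \<lceil>log 2 x\<rceil>" using lg by (simp add: k_def)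
  have k1: "log 2 x \<le> real k" using kk by simp
  have k2: "real k < log 2 x + 1" using kk by linarith
  have "x = 2 powr (log 2 x)" using x by simp
  also have "\<dots> \<le> 2 powr (real k)" using k1 by (intro powr_mono) auto
  also have "\<dots> = 2^k" by (simp add: powr_realpow)
  finally have A: "x \<le> 2^k" .
  have "C^k = exp (real k * ln C)" using C by (simp add: exp_of_nat_mult)
  also have "\<dots> \<le> exp ((log 2 x + 1) * ln C)"
    using k2 C by (intro exp_le_cancel_iff[THEN iffD2] mult_right_mono) auto
  also have "(log 2 x + 1) * ln C = ln C + ln C / ln 2 * ln x" by (simp add: log_def field_simps)
  also have "exp \<dots> = C * exp (ln C / ln 2 * ln x)" using C by (simp add: exp_add)
  finally show ?thesis using A by blast
qed

context prob_space begin


lemma tail_eq: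
  assumes rv: "\<And>i. \<eta> i \<in> borel_measurable M"
    and ident: "\<And>i. distr M borel (\<eta> i) = distr M borel (\<eta> 0)"
  shows "measure M {\<omega> \<in> space M. \<eta> i \<omega> > y} = tail M (\<eta> 0) y"
proof -
  have "measure M {\<omega> \<in> space M. \<eta> i \<omega> > y} = measure (distr M borel (\<eta> i)) {y<..}"
    using rv by (subst measure_distr) (auto intro!: arg_cong[where f="measure M"])
  also have "\<dots> = measure (distr M borel (\<eta> 0)) {y<..}" by (simp only: ident[of i])
  also have "\<dots> = tail M (\<eta> 0) y"
    using rv unfolding tail_def by (subst measure_distr) (auto intro!: arg_cong[where f="measure M"])
  finally show ?thesis .
qed

lemma union_bound:
  assumes rv: "\<And>i. \<eta> i \<in> borel_measurable M"
    and ident: "\<And>i. distr M borel (\<eta> i) = distr M borel (\<eta> 0)"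
  shows "measure M {\<omega> \<in> space M. (\<Sum>i<n. \<eta> i \<omega>) > x}
     \<le> real n * tail M (\<eta> 0) y + measure M {\<omega> \<in> space M. (\<Sum>i<n. \<eta> i \<omega>) > x \<and> (\<forall>i<n. \<eta> i \<omega> \<le> y)}"
proof -
  let ?A = "{\<omega> \<in> space M. (\<Sum>i<n. \<eta> i \<omega>) > x \<and> (\<forall>i<n. \<eta> i \<omega> \<le> y)}"
  let ?B = "\<Union>i\<in>{..<n}. {\<omega> \<in> space M. \<eta> i \<omega> > y}"
  have mA: "?A \<in> sets M" using rv by measurable
  have mBi: "\<And>i. {\<omega> \<in> space M. \<eta> i \<omega> > y} \<in> sets M" using rv by measurable
  have mB: "?B \<in> sets M" using mBi by auto
  have "measure M {\<omega> \<in> space M. (\<Sum>i<n. \<eta> i \<omega>) > x} \<le> measure M (?A \<union> ?B)"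
    using mA mB by (intro finite_measure_mono) (auto simp: not_le)
  also have "\<dots> \<le> measure M ?A + measure M ?B"
    using mA mB by (rule measure_Un_le)
  also have "measure M ?B \<le> (\<Sum>i<n. measure M {\<omega> \<in> space M. \<eta> i \<omega> > y})"
    using mBi by (intro finite_measure_subadditive_finite) auto
  also have "\<dots> = real n * tail M (\<eta> 0) y"
    using tail_eq[of \<eta>, OF rv ident] by simp
  finally show ?thesis by simp
qed

lemma exp_bound_event:
  assumes rv: "\<And>i. \<eta> i \<in> borel_measurable M"
    and indep: "indep_vars (\<lambda>_. borel) \<eta> UNIV"
    and ident: "\<And>i. distr M borel (\<eta> i) = distr M borel (\<eta> 0)"
    and h: "0 \<le> h"
  shows "measure M {\<omega> \<in> space M. (\<Sum>i<n. \<eta> i \<omega>) > x \<and> (\<forall>i<n. \<eta> i \<omega> \<le> y)}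
     \<le> exp (- h * x) * (expectation (\<lambda>\<omega>. exp (h * min (\<eta> 0 \<omega>) y))) ^ n"
proof -
  let ?A = "{\<omega> \<in> space M. (\<Sum>i<n. \<eta> i \<omega>) > x \<and> (\<forall>i<n. \<eta> i \<omega> \<le> y)}"
  define Z where "Z i \<omega> = exp (h * min (\<eta> i \<omega>) y)" for i \<omega>
  have mA: "?A \<in> sets M" using rv by measurable
  have Zm: "Z i \<in> borel_measurable M" for i unfolding Z_def using rv by measurable
  have Zb: "\<bar>Z i \<omega>\<bar> \<le> exp (h * y)" for i \<omega>
    unfolding Z_def using h by (simp add: mult_left_mono)
  have Zint: "integrable M (Z i)" for i
    using Zm Zb by (intro integrable_const_bound[where B="exp (h*y)"]) auto
  have indZ: "indep_vars (\<lambda>_. borel) Z UNIV"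
    unfolding Z_def
    by (rule indep_vars_compose2[OF indep, where Y="\<lambda>i v. exp (h * min v y)"]) measurable
  have indZ': "indep_vars (\<lambda>_. borel) Z {..<n}"
    using indep_vars_subset[OF indZ] by auto
  have EZ: "expectation (Z i) = expectation (Z 0)" for i
  proof -
    have "expectation (Z i) = integral\<^sup>L (distr M borel (\<eta> i)) (\<lambda>v. exp (h * min v y))"
      unfolding Z_def using rv by (subst integral_distr) auto
    also have "\<dots> = integral\<^sup>L (distr M borel (\<eta> 0)) (\<lambda>v. exp (h * min v y))"
      by (simp only: ident[of i])
    also have "\<dots> = expectation (Z 0)"
      unfolding Z_def using rv by (subst integral_distr) auto
    finally show ?thesis .
  qed
  have pw: "indicator ?A \<omega> \<le> exp (- h * x) * (\<Prod>i<n. Z i \<omega>)" for \<omega>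
  proof (cases "\<omega> \<in> ?A")
    case True
    hence s: "(\<Sum>i<n. min (\<eta> i \<omega>) y) = (\<Sum>i<n. \<eta> i \<omega>)" by (intro sum.cong) auto
    have "exp (- h * x) * (\<Prod>i<n. Z i \<omega>) = exp (h * (\<Sum>i<n. min (\<eta> i \<omega>) y) - h * x)"
      unfolding Z_def by (simp add: exp_sum[symmetric] exp_diff sum_distrib_left exp_minus field_simps)
    also have "\<dots> \<ge> 1" using True s h by (simp add: mult_left_mono)
    finally show ?thesis using True by simp
  next
    case False
    thus ?thesis unfolding Z_def by (simp add: prod_nonneg)
  qed
  have "measure M ?A = integral\<^sup>L M (indicator ?A)" using mA by simp
  also have "\<dots> \<le> integral\<^sup>L M (\<lambda>\<omega>. exp (- h * x) * (\<Prod>i<n. Z i \<omega>))"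
    using mA pw by (intro integral_mono integrable_mult_right integrable_real_indicator indep_vars_integrable[OF _ indZ'] Zint) (auto simp: less_top[symmetric])
  also have "\<dots> = exp (- h * x) * (\<Prod>i<n. expectation (Z i))"
    by (simp add: indep_vars_lebesgue_integral[OF _ indZ' Zint])
  also have "\<dots> = exp (- h * x) * (expectation (Z 0)) ^ n"
    by (subst prod.cong[OF refl EZ]) simp
  finally show ?thesis unfolding Z_def .
qed

lemma mgf_bound1:
  fixes X :: "'a \<Rightarrow> real"
  assumes rv: "X \<in> borel_measurable M" and int: "integrable M X" and mean: "expectation X = 0"
    and neg2: "integrable M (\<lambda>\<omega>. (X \<omega>)\<^sup>2 * indicator {..0} (X \<omega>))"
    and pos: "integrable M (\<lambda>\<omega>. (X \<omega>) powr p * indicator {0<..} (X \<omega>))"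
    and p: "1 \<le> p" "p \<le> 2" and h: "0 \<le> h" and y: "0 < y"
  shows "expectation (\<lambda>\<omega>. exp (h * min (X \<omega>) y)) \<le>
    1 + h\<^sup>2 * expectation (\<lambda>\<omega>. (X \<omega>)\<^sup>2 * indicator {..0} (X \<omega>))
      + exp (h * y) * h powr p * expectation (\<lambda>\<omega>. (X \<omega>) powr p * indicator {0<..} (X \<omega>))"
proof -
  let ?f = "\<lambda>\<omega>. (X \<omega>)\<^sup>2 * indicator {..0} (X \<omega>) :: real"
  let ?g = "\<lambda>\<omega>. (X \<omega>) powr p * indicator {0<..} (X \<omega>) :: real"
  have Zm: "(\<lambda>\<omega>. exp (h * min (X \<omega>) y)) \<in> borel_measurable M" using rv by measurable
  have Zint: "integrable M (\<lambda>\<omega>. exp (h * min (X \<omega>) y))"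
    using Zm h by (intro integrable_const_bound[where B="exp (h*y)"]) (auto simp: mult_left_mono)
  have mint: "integrable M (\<lambda>\<omega>. min (X \<omega>) y)"
    using int by (intro integrable_min) auto
  have pw: "exp (h * min (X \<omega>) y) \<le> 1 + h * min (X \<omega>) y + h\<^sup>2 * ?f \<omega> + exp (h * y) * h powr p * ?g \<omega>" for \<omega>
  proof (cases "X \<omega> \<le> 0")
    case True
    hence "exp (h * min (X \<omega>) y) \<le> 1 + h * X \<omega> + (h * X \<omega>)^2"
      using y h by (subst min_absorb1) (auto intro!: exp_le_neg simp: mult_nonneg_nonpos)
    thus ?thesis using True y by (simp add: power_mult_distrib)
  next
    case False
    define m where "m = min (X \<omega>) y"
    have m: "0 < m" "m \<le> y" "m \<le> X \<omega>" using False y by (auto simp: m_def)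
    have "exp (h * m) \<le> 1 + h * m + exp (h * y) * (h * m) powr p"
      using m h p by (intro exp_le_pos1) (auto simp: mult_left_mono)
    also have "(h * m) powr p = h powr p * m powr p" using h m by (simp add: powr_mult)
    also have "m powr p \<le> X \<omega> powr p" using m p by (intro powr_mono2) auto
    hence "exp (h * y) * (h powr p * m powr p) \<le> exp (h * y) * (h powr p * X \<omega> powr p)"
      by (intro mult_left_mono) auto
    finally show ?thesis using False by (simp add: m_def)
  qed
  have "expectation (\<lambda>\<omega>. exp (h * min (X \<omega>) y)) \<le>
     expectation (\<lambda>\<omega>. 1 + h * min (X \<omega>) y + h\<^sup>2 * ?f \<omega> + exp (h * y) * h powr p * ?g \<omega>)"
    using pw Zint mint neg2 pos by (intro integral_mono) auto
  also have "\<dots> = 1 + h * expectation (\<lambda>\<omega>. min (X \<omega>) y) + h\<^sup>2 * expectation ?f + exp (h * y) * h powr p * expectation ?g"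
    using mint neg2 pos by (simp add: prob_space)
  also have "expectation (\<lambda>\<omega>. min (X \<omega>) y) \<le> 0"
    using mint int mean by (metis (no_types, lifting) integral_mono min.cobounded1)
  hence "h * expectation (\<lambda>\<omega>. min (X \<omega>) y) \<le> 0" using h by (simp add: mult_nonneg_nonpos)
  finally show ?thesis by simp
qed

lemma mgf_bound2:
  fixes X :: "'a \<Rightarrow> real"
  assumes rv: "X \<in> borel_measurable M" and int: "integrable M X" and mean: "expectation X = 0"
    and sq: "integrable M (\<lambda>\<omega>. (X \<omega>)\<^sup>2)"
    and pos: "integrable M (\<lambda>\<omega>. (X \<omega>) powr p * indicator {0<..} (X \<omega>))"
    and p: "0 \<le> p" and h: "0 \<le> h" and y: "0 < y"
  shows "expectation (\<lambda>\<omega>. exp (h * min (X \<omega>) y)) \<le>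
    1 + h\<^sup>2 * expectation (\<lambda>\<omega>. (X \<omega>)\<^sup>2)
      + exp (h * y) * h powr p * expectation (\<lambda>\<omega>. (X \<omega>) powr p * indicator {0<..} (X \<omega>))"
proof -
  let ?f = "\<lambda>\<omega>. (X \<omega>)\<^sup>2 :: real"
  let ?g = "\<lambda>\<omega>. (X \<omega>) powr p * indicator {0<..} (X \<omega>) :: real"
  have Zm: "(\<lambda>\<omega>. exp (h * min (X \<omega>) y)) \<in> borel_measurable M" using rv by measurable
  have Zint: "integrable M (\<lambda>\<omega>. exp (h * min (X \<omega>) y))"
    using Zm h by (intro integrable_const_bound[where B="exp (h*y)"]) (auto simp: mult_left_mono)
  have mint: "integrable M (\<lambda>\<omega>. min (X \<omega>) y)"
    using int by (intro integrable_min) auto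
  have pw: "exp (h * min (X \<omega>) y) \<le> 1 + h * min (X \<omega>) y + h\<^sup>2 * ?f \<omega> + exp (h * y) * h powr p * ?g \<omega>" for \<omega>
  proof (cases "X \<omega> \<le> 0")
    case True
    hence "exp (h * min (X \<omega>) y) \<le> 1 + h * X \<omega> + (h * X \<omega>)^2"
      using y h by (subst min_absorb1) (auto intro!: exp_le_neg simp: mult_nonneg_nonpos)
    thus ?thesis using True y by (simp add: power_mult_distrib)
  next
    case False
    define m where "m = min (X \<omega>) y"
    have m: "0 < m" "m \<le> y" "m \<le> X \<omega>" using False y by (auto simp: m_def)
    have "exp (h * m) \<le> 1 + h * m + (h * m)^2 + exp (h * y) * (h * m) powr p"
      using m h p by (intro exp_le_pos2) (auto simp: mult_left_mono)
    also have "(h * m) powr p = h powr p * m powr p" using h m by (simp add: powr_mult)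
    also have "m powr p \<le> X \<omega> powr p" using m p by (intro powr_mono2) auto
    hence "exp (h * y) * (h powr p * m powr p) \<le> exp (h * y) * (h powr p * X \<omega> powr p)"
      by (intro mult_left_mono) auto
    also have "(h * m)^2 \<le> h^2 * (X \<omega>)^2"
      using m h by (simp add: power_mult_distrib mult_left_mono power_mono)
    finally show ?thesis using False by (simp add: m_def)
  qed
  have "expectation (\<lambda>\<omega>. exp (h * min (X \<omega>) y)) \<le>
     expectation (\<lambda>\<omega>. 1 + h * min (X \<omega>) y + h\<^sup>2 * ?f \<omega> + exp (h * y) * h powr p * ?g \<omega>)"
    using pw Zint mint sq pos by (intro integral_mono) auto
  also have "\<dots> = 1 + h * expectation (\<lambda>\<omega>. min (X \<omega>) y) + h\<^sup>2 * expectation ?f + exp (h * y) * h powr p * expectation ?g"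
    using mint sq pos by (simp add: prob_space)
  also have "expectation (\<lambda>\<omega>. min (X \<omega>) y) \<le> 0"
    using mint int mean by (metis (no_types, lifting) integral_mono min.cobounded1)
  hence "h * expectation (\<lambda>\<omega>. min (X \<omega>) y) \<le> 0" using h by (simp add: mult_nonneg_nonpos)
  finally show ?thesis by simp
qed


lemma tail_nonneg: "0 \<le> tail M X t"
  unfolding tail_def by simp

lemma tail_mono:
  assumes "X \<in> borel_measurable M" "s \<le> t"
  shows "tail M X t \<le> tail M X s"
  unfolding tail_def using assms by (intro finite_measure_mono) (auto, measurable)

lemma tail_iter:
  assumes dv: "\<And>x. tail M X (x / 2) \<le> C * tail M X x" and C: "0 \<le> C"
  shows "tail M X (x / 2^m) \<le> C^m * tail M X x"
proof (induction m)
  case 0 then show ?case by simp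
next
  case (Suc m)
  have "tail M X (x / 2^Suc m) = tail M X ((x / 2^m) / 2)" by (simp add: field_simps)
  also have "\<dots> \<le> C * tail M X (x / 2^m)" by (rule dv)
  also have "\<dots> \<le> C * (C^m * tail M X x)" using Suc C by (intro mult_left_mono) auto
  finally show ?case by simp
qed

lemma tail_lower:
  assumes rv: "X \<in> borel_measurable M"
    and dv: "\<And>x. tail M X (x / 2) \<le> C * tail M X x" and C: "1 \<le> C"
  shows "1 \<le> x \<Longrightarrow> x \<le> 2^k \<Longrightarrow> tail M X 1 \<le> C^k * tail M X x"
proof (induction k arbitrary: x)
  case 0 then show ?case by simp
next
  case (Suc k)
  have "tail M X 1 \<le> C^k * tail M X (max 1 (x/2))"
    using Suc by (intro Suc.IH) auto
  also have "\<dots> \<le> C^k * tail M X (x/2)"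
    using C rv by (intro mult_left_mono tail_mono) auto
  also have "\<dots> \<le> C^k * (C * tail M X x)"
    using C dv by (intro mult_left_mono) auto
  finally show ?case by (simp add: mult.assoc mult.left_commute)
qed

lemma main_bound:
  assumes rv: "\<And>i. \<eta> i \<in> borel_measurable M"
    and indep: "indep_vars (\<lambda>_. borel) \<eta> UNIV"
    and ident: "\<And>i. distr M borel (\<eta> i) = distr M borel (\<eta> 0)"
    and h: "0 \<le> h"
    and mgf: "expectation (\<lambda>\<omega>. exp (h * min (\<eta> 0 \<omega>) y)) \<le> 1 + v" and v: "0 \<le> v"
  shows "measure M {\<omega> \<in> space M. (\<Sum>i<n. \<eta> i \<omega>) > x}
     \<le> real n * tail M (\<eta> 0) y + exp (- h * x + real n * v)"
proof -
  have "measure M {\<omega> \<in> space M. (\<Sum>i<n. \<eta> i \<omega>) > x}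
     \<le> real n * tail M (\<eta> 0) y + measure M {\<omega> \<in> space M. (\<Sum>i<n. \<eta> i \<omega>) > x \<and> (\<forall>i<n. \<eta> i \<omega> \<le> y)}"
    by (rule union_bound[of \<eta>, OF rv ident])
  also have "measure M {\<omega> \<in> space M. (\<Sum>i<n. \<eta> i \<omega>) > x \<and> (\<forall>i<n. \<eta> i \<omega> \<le> y)}
      \<le> exp (- h * x) * (expectation (\<lambda>\<omega>. exp (h * min (\<eta> 0 \<omega>) y))) ^ n"
    by (rule exp_bound_event[of \<eta>, OF rv indep ident h])
  also have "(expectation (\<lambda>\<omega>. exp (h * min (\<eta> 0 \<omega>) y))) ^ n \<le> (1 + v) ^ n"
    using mgf by (intro power_mono) auto
  also have "(1 + v) ^ n \<le> exp v ^ n"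
    using v by (intro power_mono) (auto simp: exp_ge_add_one_self)
  also have "exp v ^ n = exp (real n * v)" by (simp add: exp_of_nat_mult)
  finally show ?thesis by (simp add: exp_add[symmetric] mult_left_mono)
qed

lemma degenerate:
  fixes n :: nat
  assumes rv: "\<And>i. \<eta> i \<in> borel_measurable M"
    and ident: "\<And>i. distr M borel (\<eta> i) = distr M borel (\<eta> 0)"
    and dv: "\<And>x. tail M (\<eta> 0) (x / 2) \<le> C * tail M (\<eta> 0) x" and C: "0 \<le> C"
    and t1: "tail M (\<eta> 0) 1 = 0" and x: "0 < x"
  shows "measure M {\<omega> \<in> space M. (\<Sum>i<n. \<eta> i \<omega>) > x} \<le> 0"
proof -
  obtain k where k: "real n / x < 2^k" using real_arch_pow[of 2] by auto
  have "tail M (\<eta> 0) (1 / 2^k) \<le> C^k * tail M (\<eta> 0) 1" by (rule tail_iter[OF dv C])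
  hence tk: "tail M (\<eta> 0) (1 / 2^k) = 0" using t1 tail_nonneg[of "\<eta> 0"] by (simp add: order_antisym)
  have emp: "{\<omega> \<in> space M. (\<Sum>i<n. \<eta> i \<omega>) > x \<and> (\<forall>i<n. \<eta> i \<omega> \<le> 1 / 2^k)} = {}"
  proof -
    { fix \<omega> assume "\<forall>i<n. \<eta> i \<omega> \<le> 1 / 2^k"
      hence "(\<Sum>i<n. \<eta> i \<omega>) \<le> real n * (1 / 2^k)"
        using sum_bounded_above[of "{..<n}" "\<lambda>i. \<eta> i \<omega>" "1 / 2^k"] by auto
      also have "\<dots> < x" using k x by (simp add: field_simps)
      finally have "(\<Sum>i<n. \<eta> i \<omega>) < x" . }
    thus ?thesis by force
  qed
  show ?thesis using union_bound[of \<eta>, OF rv ident, where n=n and x=x and y="1 / 2^k"] tk emp by simp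
qed

end



theorem proposition2:
  fixes M :: "'a measure" and \<eta> :: "nat \<Rightarrow> 'a \<Rightarrow> real"
  assumes "prob_space M"
    and rv: "\<And>i. \<eta> i \<in> borel_measurable M"
    and indep: "prob_space.indep_vars M (\<lambda>_. borel) \<eta> UNIV"
    and ident: "\<And>i. distr M borel (\<eta> i) = distr M borel (\<eta> 0)"
    and int: "integrable M (\<eta> 0)"
    and mean0: "prob_space.expectation M (\<eta> 0) = 0"
    and neg2: "integrable M (\<lambda>\<omega>. (\<eta> 0 \<omega>)\<^sup>2 * indicator {..0} (\<eta> 0 \<omega>))"
    and domvar: "\<exists>C. \<forall>x. tail M (\<eta> 0) (x / 2) \<le> C * tail M (\<eta> 0) x"
  shows
    "(\<forall>\<delta>. 0 < \<delta> \<and> \<delta> < 1 \<and>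
        integrable M (\<lambda>\<omega>. (\<eta> 0 \<omega>) powr (1 + \<delta>) * indicator {0<..} (\<eta> 0 \<omega>)) \<longrightarrow>
        (\<forall>\<delta>'. 0 < \<delta>' \<and> \<delta>' < \<delta> \<longrightarrow>
          (\<exists>c. \<forall>x > 0. \<forall>n::nat. 1 \<le> n \<and> real n \<le> x powr (1 + \<delta>') \<longrightarrow>
             measure M {\<omega> \<in> space M. (\<Sum>i<n. \<eta> i \<omega>) > x} \<le> c * real n * tail M (\<eta> 0) x)))
   \<and>
     (\<forall>\<delta>. 0 < \<delta> \<and>
        integrable M (\<lambda>\<omega>. (\<eta> 0 \<omega>) powr (2 + \<delta>) * indicator {0<..} (\<eta> 0 \<omega>)) \<longrightarrow>
        (\<exists>c > 0. \<forall>x > 0. \<forall>n::nat. 1 \<le> n \<and> real n \<le> x\<^sup>2 / (c * ln x) \<longrightarrow>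
             measure M {\<omega> \<in> space M. (\<Sum>i<n. \<eta> i \<omega>) > x} \<le> c * real n * tail M (\<eta> 0) x))"
proof -
  interpret prob_space M by fact
  let ?X = "\<eta> 0"
  have rv0: "?X \<in> borel_measurable M" by (rule rv)
  obtain C0 where C0: "\<forall>x. tail M ?X (x/2) \<le> C0 * tail M ?X x" using domvar by blast
  define C where "C = max 1 C0"
  have C1: "1 \<le> C" by (simp add: C_def)
  have dv: "tail M ?X (x/2) \<le> C * tail M ?X x" for x
  proof -
    have "C0 * tail M ?X x \<le> C * tail M ?X x"
      by (intro mult_right_mono) (auto simp: C_def tail_nonneg)
    thus ?thesis using C0 by (meson order_trans)
  qed
  define p1 where "p1 = tail M ?X 1"
  have p1ge: "0 \<le> p1" unfolding p1_def by (rule tail_nonneg)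
  define \<beta> where "\<beta> = ln C / ln 2"
  have \<beta>: "0 \<le> \<beta>" using C1 by (simp add: \<beta>_def)
  have lower: "exp (- (\<beta> * ln x)) \<le> C / p1 * tail M ?X x" if xx1: "1 \<le> x" and pp: "0 < p1" for x
  proof -
    obtain k :: nat where k: "x \<le> 2^k" "C^k \<le> C * exp (\<beta> * ln x)"
      using pow2_cover[OF xx1 C1] unfolding \<beta>_def by blast
    have "p1 \<le> C^k * tail M ?X x" unfolding p1_def using tail_lower[OF rv0 dv C1 xx1 k(1)] .
    also have "\<dots> \<le> C * exp (\<beta> * ln x) * tail M ?X x"
      using k(2) by (intro mult_right_mono) (auto simp: tail_nonneg)
    finally have "p1 \<le> C * exp (\<beta> * ln x) * tail M ?X x" .
    hence "p1 * exp (- (\<beta> * ln x)) \<le> C * tail M ?X x" by (simp add: exp_minus field_simps)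
    thus ?thesis using pp by (simp add: field_simps)
  qed
  have titer: "tail M ?X (x / r) \<le> C^m * tail M ?X x" if "0 < x" "0 < r" "r \<le> 2^m" for x r m
  proof -
    have "x / 2^m \<le> x / r" using that by (intro divide_left_mono) auto
    hence "tail M ?X (x / r) \<le> tail M ?X (x / 2^m)" using rv0 by (intro tail_mono) auto
    also have "\<dots> \<le> C^m * tail M ?X x" using tail_iter[OF dv] C1 by simp
    finally show ?thesis .
  qed
  have fin: "real n * (C^m * t) + exp K * (C / p1) * t \<le> (C^m + exp K * (C / p1)) * real n * t"
    if "1 \<le> n" "0 \<le> t" for n :: nat and t K m
  proof -
    have q: "0 \<le> exp K * (C / p1) * t" using that C1 p1ge by simp
    have "1 * (exp K * (C / p1) * t) \<le> real n * (exp K * (C / p1) * t)"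
      using that q by (intro mult_right_mono) auto
    thus ?thesis by (simp add: algebra_simps)
  qed
  show ?thesis
  proof (intro conjI allI impI)
    fix \<delta> \<delta>' :: real
    assume H: "0 < \<delta> \<and> \<delta> < 1 \<and> integrable M (\<lambda>\<omega>. (\<eta> 0 \<omega>) powr (1 + \<delta>) * indicator {0<..} (\<eta> 0 \<omega>))"
      and H': "0 < \<delta>' \<and> \<delta>' < \<delta>"
    show "\<exists>c. \<forall>x > 0. \<forall>n::nat. 1 \<le> n \<and> real n \<le> x powr (1 + \<delta>') \<longrightarrow>
             measure M {\<omega> \<in> space M. (\<Sum>i<n. \<eta> i \<omega>) > x} \<le> c * real n * tail M (\<eta> 0) x"
    proof (cases "p1 = 0")
      case True
      show ?thesis
      proof (intro exI[of _ 1] allI impI)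
        fix x :: real and n :: nat
        assume "0 < x" "1 \<le> n \<and> real n \<le> x powr (1 + \<delta>')"
        have "measure M {\<omega> \<in> space M. (\<Sum>i<n. \<eta> i \<omega>) > x} \<le> 0"
          using degenerate[of \<eta>, OF rv ident dv _ _ \<open>0 < x\<close>] C1 True by (simp add: p1_def)
        also have "0 \<le> 1 * real n * tail M (\<eta> 0) x" by (simp add: tail_nonneg)
        finally show "measure M {\<omega> \<in> space M. (\<Sum>i<n. \<eta> i \<omega>) > x} \<le> 1 * real n * tail M (\<eta> 0) x" .
      qed
    next
      case False
      hence p1: "0 < p1" using p1ge by simp
      define A where "A = expectation (\<lambda>\<omega>. (?X \<omega>)\<^sup>2 * indicator {..0} (?X \<omega>))"
      define B where "B = expectation (\<lambda>\<omega>. (?X \<omega>) powr (1+\<delta>) * indicator {0<..} (?X \<omega>))"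
      have A0: "0 \<le> A" unfolding A_def by (intro integral_nonneg_AE) (auto simp: indicator_def)
      have B0: "0 \<le> B" unfolding B_def by (intro integral_nonneg_AE) (auto simp: indicator_def)
      define a where "a = \<beta> + 1"
      have a0: "0 < a" using \<beta> by (simp add: a_def)
      define \<epsilon> where "\<epsilon> = (\<delta> - \<delta>')/2"
      have \<epsilon>0: "0 < \<epsilon>" using H' by (simp add: \<epsilon>_def)
      define r where "r = a / \<epsilon>"
      have r0: "0 < r" using a0 \<epsilon>0 by (simp add: r_def)
      obtain m :: nat where m: "r < 2^m" using real_arch_pow[of 2 r] by auto
      define K where "K = a^2 * A * (2/(1-\<delta>')) powr 2 + a powr (1+\<delta>) * B * ((1+\<delta>)/((\<delta> - \<delta>')/2)) powr (1+\<delta>)"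
      show ?thesis
      proof (intro exI[of _ "C^m + exp K * (C / p1)"] allI impI)
        fix x :: real and n :: nat
        assume x0: "0 < x" and nn: "1 \<le> n \<and> real n \<le> x powr (1+\<delta>')"
        have x1: "1 \<le> x"
        proof (rule ccontr)
          assume "\<not> 1 \<le> x"
          hence "x powr (1+\<delta>') < 1 powr (1+\<delta>')" using x0 H' H by (intro powr_less_mono2) auto
          hence "x powr (1+\<delta>') < 1" by simp
          moreover have "1 \<le> real n" using nn by simp
          ultimately show False using nn by linarith
        qed
        define h where "h = a * ln x / x"
        define y where "y = x / r"
        have h0: "0 \<le> h" using x1 a0 by (simp add: h_def)
        have y0: "0 < y" using x0 r0 by (simp add: y_def)
        have hy: "h * y = (\<delta> - \<delta>')/2 * ln x"
          using x0 a0 \<epsilon>0 by (simp add: h_def y_def r_def \<epsilon>_def field_simps)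
        define v where "v = h^2 * A + exp (h*y) * h powr (1+\<delta>) * B"
        have v0: "0 \<le> v" unfolding v_def using A0 B0 by simp
        have mgf: "expectation (\<lambda>\<omega>. exp (h * min (?X \<omega>) y)) \<le> 1 + v"
          unfolding v_def A_def B_def
          using mgf_bound1[OF rv0 int mean0 neg2, of "1+\<delta>" h y] H h0 y0 by simp
        have nv: "real n * v \<le> K"
          unfolding v_def hy unfolding K_def h_def
          using num1[of \<delta>' \<delta> a A B x n] H H' a0 A0 B0 x1 nn by simp
        have P: "measure M {\<omega> \<in> space M. (\<Sum>i<n. \<eta> i \<omega>) > x}
            \<le> real n * tail M ?X y + exp (- h * x + real n * v)"
          by (rule main_bound[of \<eta>, OF rv indep ident h0 mgf v0])
        have T1: "tail M ?X y \<le> C^m * tail M ?X x"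
          unfolding y_def using titer[of x r m] x0 r0 m by simp
        have "exp (- h * x + real n * v) \<le> exp (- (\<beta> * ln x) + K)"
        proof -
          have "- h * x = - (a * ln x)" using x0 by (simp add: h_def)
          moreover have "\<beta> * ln x \<le> a * ln x" using x1 by (intro mult_right_mono) (auto simp: a_def)
          ultimately show ?thesis using nv by simp
        qed
        also have "\<dots> = exp K * exp (- (\<beta> * ln x))" by (metis add.commute exp_add)
        also have "\<dots> \<le> exp K * (C / p1 * tail M ?X x)"
          using lower[OF x1 p1] by (intro mult_left_mono) auto
        finally have T2: "exp (- h * x + real n * v) \<le> exp K * (C / p1) * tail M ?X x" by simp
        have "measure M {\<omega> \<in> space M. (\<Sum>i<n. \<eta> i \<omega>) > x}
            \<le> real n * (C^m * tail M ?X x) + exp K * (C / p1) * tail M ?X x"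
          using P T1 T2 by (smt (verit) mult_left_mono of_nat_0_le_iff)
        also have "\<dots> \<le> (C^m + exp K * (C / p1)) * real n * tail M ?X x"
          using fin[of n "tail M ?X x"] nn by (simp add: tail_nonneg)
        finally show "measure M {\<omega> \<in> space M. (\<Sum>i<n. \<eta> i \<omega>) > x}
            \<le> (C^m + exp K * (C / p1)) * real n * tail M (\<eta> 0) x" .
      qed
    qed
  next
    fix \<delta> :: real
    assume H: "0 < \<delta> \<and> integrable M (\<lambda>\<omega>. (\<eta> 0 \<omega>) powr (2 + \<delta>) * indicator {0<..} (\<eta> 0 \<omega>))"
    show "\<exists>c > 0. \<forall>x > 0. \<forall>n::nat. 1 \<le> n \<and> real n \<le> x\<^sup>2 / (c * ln x) \<longrightarrow>
             measure M {\<omega> \<in> space M. (\<Sum>i<n. \<eta> i \<omega>) > x} \<le> c * real n * tail M (\<eta> 0) x"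
    proof (cases "p1 = 0")
      case True
      show ?thesis
      proof (intro exI[of _ 1] conjI allI impI)
        fix x :: real and n :: nat
        assume "0 < x" "1 \<le> n \<and> real n \<le> x\<^sup>2 / (1 * ln x)"
        have "measure M {\<omega> \<in> space M. (\<Sum>i<n. \<eta> i \<omega>) > x} \<le> 0"
          using degenerate[of \<eta>, OF rv ident dv _ _ \<open>0 < x\<close>] C1 True by (simp add: p1_def)
        also have "0 \<le> 1 * real n * tail M (\<eta> 0) x" by (simp add: tail_nonneg)
        finally show "measure M {\<omega> \<in> space M. (\<Sum>i<n. \<eta> i \<omega>) > x} \<le> 1 * real n * tail M (\<eta> 0) x" .
      qed simp
    next
      case False
      hence p1: "0 < p1" using p1ge by simp
      have pos: "integrable M (\<lambda>\<omega>. (?X \<omega>) powr (2+\<delta>) * indicator {0<..} (?X \<omega>))" using H by simp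
      have sq: "integrable M (\<lambda>\<omega>. (?X \<omega>)\<^sup>2)"
      proof -
        have fi: "integrable M (\<lambda>\<omega>. (?X \<omega>)\<^sup>2 * indicator {..0} (?X \<omega>) + 1 + (?X \<omega>) powr (2+\<delta>) * indicator {0<..} (?X \<omega>))"
          by (rule Bochner_Integration.integrable_add[OF Bochner_Integration.integrable_add[OF neg2 integrable_const] pos])
        have gm: "(\<lambda>\<omega>. (?X \<omega>)\<^sup>2) \<in> borel_measurable M" using rv0 by measurable
        have ae: "AE \<omega> in M. norm ((?X \<omega>)\<^sup>2) \<le> norm ((?X \<omega>)\<^sup>2 * indicator {..0} (?X \<omega>) + 1 + (?X \<omega>) powr (2+\<delta>) * indicator {0<..} (?X \<omega>))"
        proof (intro AE_I2)
          fix \<omega>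
          let ?t = "?X \<omega>"
          have "?t\<^sup>2 \<le> ?t\<^sup>2 * indicator {..0} ?t + 1 + ?t powr (2+\<delta>) * indicator {0<..} ?t"
          proof (cases "?t \<le> 0")
            case True thus ?thesis by simp
          next
            case False
            show ?thesis
            proof (cases "?t \<le> 1")
              case True
              have "?t\<^sup>2 \<le> 1" using True False by (simp add: power_le_one)
              moreover have "0 \<le> ?t powr (2+\<delta>)" by simp
              ultimately have "?t\<^sup>2 \<le> 1 + ?t powr (2+\<delta>)" by linarith
              thus ?thesis using False by simp
            next
              case f2: False
              have "?t powr 2 \<le> ?t powr (2+\<delta>)" using f2 H by (intro powr_mono) auto
              hence "?t\<^sup>2 \<le> ?t powr (2+\<delta>)" using False by (simp add: powr_numeral)
              thus ?thesis using False by simp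
            qed
          qed
          moreover have "0 \<le> ?t\<^sup>2 * indicator {..0} ?t + 1 + ?t powr (2+\<delta>) * indicator {0<..} ?t"
            by (simp add: indicator_def)
          ultimately show "norm (?t\<^sup>2) \<le> norm (?t\<^sup>2 * indicator {..0} ?t + 1 + ?t powr (2+\<delta>) * indicator {0<..} ?t)"
            by simp
        qed
        show ?thesis by (rule Bochner_Integration.integrable_bound[OF fi gm ae])
      qed
      define S where "S = expectation (\<lambda>\<omega>. (?X \<omega>)\<^sup>2)"
      define B where "B = expectation (\<lambda>\<omega>. (?X \<omega>) powr (2+\<delta>) * indicator {0<..} (?X \<omega>))"
      have S0: "0 \<le> S" unfolding S_def by (intro integral_nonneg_AE) auto
      have B0: "0 \<le> B" unfolding B_def by (intro integral_nonneg_AE) (auto simp: indicator_def)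
      define a where "a = 2 * (\<beta> + 1)"
      have a0: "0 < a" using \<beta> by (simp add: a_def)
      define \<epsilon> where "\<epsilon> = \<delta>/2"
      have \<epsilon>0: "0 < \<epsilon>" using H by (simp add: \<epsilon>_def)
      define r where "r = a / \<epsilon>"
      have r0: "0 < r" using a0 \<epsilon>0 by (simp add: r_def)
      obtain m :: nat where m: "r < 2^m" using real_arch_pow[of 2 r] by auto
      define K where "K = a powr (2+\<delta>) * B * ((1+\<delta>)/(\<delta>/2)) powr (1+\<delta>)"
      define c where "c = max (max (C^m + exp K * (C / p1)) (2 * a * S)) 1"
      have c1: "1 \<le> c" "2 * a * S \<le> c" "C^m + exp K * (C / p1) \<le> c" by (auto simp: c_def)
      show ?thesis
      proof (intro exI[of _ c] conjI allI impI)
        show "0 < c" using c1 by simp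
        fix x :: real and n :: nat
        assume x0: "0 < x" and nn: "1 \<le> n \<and> real n \<le> x\<^sup>2 / (c * ln x)"
        have x1: "1 < x"
        proof (rule ccontr)
          assume "\<not> 1 < x"
          hence "ln x \<le> 0" using x0 by simp
          hence "x\<^sup>2 / (c * ln x) \<le> 0" using c1 by (intro divide_nonneg_nonpos) (auto simp: mult_nonneg_nonpos)
          moreover have "1 \<le> real n" using nn by simp
          ultimately show False using nn by linarith
        qed
        define h where "h = a * ln x / x"
        define y where "y = x / r"
        have h0: "0 \<le> h" using x1 a0 by (simp add: h_def)
        have y0: "0 < y" using x0 r0 by (simp add: y_def)
        have hy: "h * y = \<delta>/2 * ln x"
          using x0 a0 \<epsilon>0 by (simp add: h_def y_def r_def \<epsilon>_def field_simps)
        define v where "v = h^2 * S + exp (h*y) * h powr (2+\<delta>) * B"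
        have v0: "0 \<le> v" unfolding v_def using S0 B0 by simp
        have mgf: "expectation (\<lambda>\<omega>. exp (h * min (?X \<omega>) y)) \<le> 1 + v"
          unfolding v_def S_def B_def
          using mgf_bound2[OF rv0 int mean0 sq pos, of h y] H h0 y0 by simp
        have nv: "real n * v \<le> a / 2 * ln x + K"
          unfolding v_def hy unfolding K_def h_def
          using num2[of \<delta> a S B c x n] H a0 S0 B0 c1 x1 nn by simp
        have P: "measure M {\<omega> \<in> space M. (\<Sum>i<n. \<eta> i \<omega>) > x}
            \<le> real n * tail M ?X y + exp (- h * x + real n * v)"
          by (rule main_bound[of \<eta>, OF rv indep ident h0 mgf v0])
        have T1: "tail M ?X y \<le> C^m * tail M ?X x"
          unfolding y_def using titer[of x r m] x0 r0 m by simp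
        have "exp (- h * x + real n * v) \<le> exp (- (\<beta> * ln x) + K)"
        proof -
          have "- h * x = - (a * ln x)" using x0 by (simp add: h_def)
          moreover have "\<beta> * ln x \<le> a / 2 * ln x" using x1 by (intro mult_right_mono) (auto simp: a_def)
          ultimately show ?thesis using nv by simp
        qed
        also have "\<dots> = exp K * exp (- (\<beta> * ln x))" by (metis add.commute exp_add)
        also have "\<dots> \<le> exp K * (C / p1 * tail M ?X x)"
          using lower[of x] x1 p1 by (intro mult_left_mono) auto
        finally have T2: "exp (- h * x + real n * v) \<le> exp K * (C / p1) * tail M ?X x" by simp
        have "measure M {\<omega> \<in> space M. (\<Sum>i<n. \<eta> i \<omega>) > x}
            \<le> real n * (C^m * tail M ?X x) + exp K * (C / p1) * tail M ?X x"
          using P T1 T2 by (smt (verit) mult_left_mono of_nat_0_le_iff)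
        also have "\<dots> \<le> (C^m + exp K * (C / p1)) * real n * tail M ?X x"
          using fin[of n "tail M ?X x"] nn by (simp add: tail_nonneg)
        also have "\<dots> \<le> c * real n * tail M ?X x"
          using c1 by (intro mult_right_mono) (auto simp: tail_nonneg)
        finally show "measure M {\<omega> \<in> space M. (\<Sum>i<n. \<eta> i \<omega>) > x}
            \<le> c * real n * tail M (\<eta> 0) x" .
      qed
    qed
  qed
qed

end
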